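(* Let $T$ be a sequence of length $n$ over $\mathbb{A}$ and $I\subseteq\mathbb{A}$ an itemset with $|I|\ge 2$. Let $0<i<n$ and let $r_i^1(I),\dots,r_i^{|I|}(I)$ be the ordering of $I$ described in the context. If $T[i]=r_i^{|I|}(I)$, then for every integer $k\ge 0$ $$H_i[k]=H_{i-1}[k]+\mathbf{1}\big[k=\lambda(r_i^{|I|}(I),i-1)\big]-\mathbf{1}\big[k=\lambda(r_i^{|I|-1}(I),i-1)\big].$$ If $T[i]\neq r_i^{|I|}(I)$ (in particular if $T[i]\notin I$), then $H_i[k]=H_{i-1}[k]$ for all $k\ge 0$.
   Context: A sequence $T=(T[0],\dots,T[n-1])$ has entries in $\mathbb{A}$. For $e\in\mathbb{A}$ and $-1\le i\le n-1$, let $\lambda(e,i)=i-\max\{j\le i:T[j]=e\}$, where the maximum of the empty set is taken to be $-1$ (so $\lambda(e,i)=i+1$ if $e$ does not occur among $T[0],\dots,T[i]$). For $0<i<n$, the elements of $I$ are listed as $r_i^1(I),\dots,r_i^{|I|}(I)$ so that $\lambda(r_i^1(I),i-1)\le\lambda(r_i^2(I),i-1)\le\dots\le\lambda(r_i^{|I|}(I),i-1)$ (ties broken arbitrarily but fixed); thus $r_i^{|I|}(I)$ is an item of $I$ last seen furthest in the past before index $i$. For nonempty $A\subseteq I$ and an index $j$ with $T[j]\in A$, let $p_A(j)=\max\{j'<j:T[j']\in A\}$ (or $-1$ if no such $j'$); the $A$-gap closed at $j$ is $T[p_A(j)+1..j-1]$, of length $j-1-p_A(j)\ge 0$. For $-1\le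 i\le n-1$ and integers $k\ge0$, the partial gap histogram is $$H_i[k]=\sum_{\emptyset\ne A\subseteq I}(-1)^{|A|+1}\,\#\{\,j\le i:\ T[j]\in A,\ j-1-p_A(j)=k\,\}.$$ $\mathbf{1}[\cdot]$ denotes the indicator (1 if the condition holds, 0 otherwise). *)

theory Defs
  imports Main
begin

text \<open>lambda(e,i) = i - max{j \<le> i. T[j] = e}, with max of empty set = -1 (so value i+1).
  Indices are natural numbers; only i \<ge> 0 is needed.\<close>
definition lam :: "'a list \<Rightarrow> 'a \<Rightarrow> nat \<Rightarrow> nat" where
  "lam T e i = (if \<exists>j\<le>i. T ! j = e then i - Max {j. j \<le> i \<and> T ! j = e} else i + 1)"

definition prevA :: "'a list \<Rightarrow> 'a set \<Rightarrow> nat \<Rightarrow> int" where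
  "prevA T A j = (if \<exists>j'<j. T ! j' \<in> A then int (Max {j'. j' < j \<and> T ! j' \<in> A}) else -1)"

definition gapH :: "'a list \<Rightarrow> 'a set \<Rightarrow> nat \<Rightarrow> nat \<Rightarrow> int" where
  "gapH T I i k = (\<Sum>A \<in> {A. A \<subseteq> I \<and> A \<noteq> {}}.
      (-1) ^ (card A + 1) *
      int (card {j. j \<le> i \<and> T ! j \<in> A \<and> int j - 1 - prevA T A j = int k}))"

end

theory Submission
  imports Defs
begin

lemma sum_Pow_insert:
  assumes "finite X" "x \<notin> X"
  shows "sum g (Pow (insert x X)) = sum g (Pow X) + sum (\<lambda>C. g (insert x C)) (Pow X)"
proof -
  have inj: "inj_on (insert x) (Pow X)" using assms(2) unfolding inj_on_def
    by (metis PowD insert_absorb insert_ident subsetD)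
  have disj: "Pow X \<inter> insert x ` Pow X = {}" using assms(2) by auto
  have "sum g (Pow (insert x X)) = sum g (Pow X \<union> insert x ` Pow X)" by (simp add: Pow_insert)
  also have "\<dots> = sum g (Pow X) + sum g (insert x ` Pow X)"
    by (rule sum.union_disjoint) (use assms disj in auto)
  also have "sum g (insert x ` Pow X) = sum (\<lambda>C. g (insert x C)) (Pow X)"
    using sum.reindex[OF inj] by simp
  finally show ?thesis .
qed

lemma split_sum:
  fixes g :: "'a set \<Rightarrow> int"
  assumes fin: "finite I" and e: "e \<in> I" and f: "f \<in> I" "f \<noteq> e"
    and z: "\<And>A. e \<notin> A \<Longrightarrow> g A = 0"
  shows "(\<Sum>A\<in>Pow I. g A) = (\<Sum>C\<in>Pow (I - {e,f}). g (insert e C) + g (insert e (insert f C)))"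
proof -
  define R where "R = I - {e,f}"
  have I: "I = insert e (insert f R)" using e f unfolding R_def by auto
  have fR: "finite R" using fin unfolding R_def by auto
  have "(\<Sum>A\<in>Pow I. g A) = sum g (Pow (insert f R)) + sum (\<lambda>C. g (insert e C)) (Pow (insert f R))"
    unfolding I by (rule sum_Pow_insert) (use fR f in \<open>auto simp: R_def\<close>)
  also have "sum g (Pow (insert f R)) = 0"
    by (rule sum.neutral) (use f z in \<open>auto simp: R_def\<close>)
  also have "sum (\<lambda>C. g (insert e C)) (Pow (insert f R)) =
     sum (\<lambda>C. g (insert e C)) (Pow R) + sum (\<lambda>C. g (insert e (insert f C))) (Pow R)"
    by (rule sum_Pow_insert) (use fR in \<open>auto simp: R_def\<close>)
  finally show ?thesis unfolding R_def[symmetric] by (simp add: sum.distrib)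
qed

lemma card_ef:
  assumes "C \<subseteq> I - {e,f}" "finite I" "f \<noteq> e"
  shows "card (insert e C) = card C + 1" "card (insert e (insert f C)) = card C + 2"
proof -
  have "finite C" using assms finite_subset by blast
  moreover have "e \<notin> C" "f \<notin> C" using assms by auto
  ultimately show "card (insert e C) = card C + 1" "card (insert e (insert f C)) = card C + 2"
    using assms(3) by auto
qed

lemma comb_a:
  fixes lf :: "'a \<Rightarrow> nat"
  assumes fin: "finite I" and e: "e \<in> I" and f: "f \<in> I" "f \<noteq> e" and le: "lf e \<le> lf f"
  shows "(\<Sum>A\<in>Pow I. (-1::int)^(card A+1) * (if e \<in> A \<and> Min (lf ` A) = k then 1 else 0)) = 0"
proof -
  let ?g = "\<lambda>A. (-1::int)^(card A+1) * (if e \<in> A \<and> Min (lf ` A) = k then 1 else 0)"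
  have "(\<Sum>A\<in>Pow I. ?g A) = (\<Sum>C\<in>Pow (I - {e,f}). ?g (insert e C) + ?g (insert e (insert f C)))"
    by (rule split_sum) (use assms in auto)
  also have "\<dots> = 0"
  proof (rule sum.neutral, rule ballI)
    fix C assume C: "C \<in> Pow (I - {e,f})"
    hence fC: "finite C" using fin finite_subset by blast
    have c: "card (insert e C) = card C + 1" "card (insert e (insert f C)) = card C + 2"
      using card_ef[of C I e f] C fin f by auto
    have m1: "Min (lf ` insert e C) \<le> lf e" using fC by simp
    have im: "lf ` insert e (insert f C) = insert (lf f) (lf ` insert e C)" by auto
    have "Min (lf ` insert e (insert f C)) = min (lf f) (Min (lf ` insert e C))"
      unfolding im by (rule Min_insert) (use fC in auto)
    also have "\<dots> = Min (lf ` insert e C)" using m1 le by simp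
    finally have m: "Min (lf ` insert e (insert f C)) = Min (lf ` insert e C)" .
    show "?g (insert e C) + ?g (insert e (insert f C)) = 0"
      using c m by simp
  qed
  finally show ?thesis .
qed

lemma comb_b:
  fixes lf :: "'a \<Rightarrow> nat"
  assumes fin: "finite I" and e: "e \<in> I" and f: "f \<in> I" "f \<noteq> e" and le: "lf f \<le> lf e"
    and lc: "\<And>c. c \<in> I - {e} \<Longrightarrow> lf c \<le> lf f"
  shows "(\<Sum>A\<in>Pow I. (-1::int)^(card A+1) * (if e \<in> A \<and> Min (lf ` A) = k then 1 else 0))
     = (if k = lf e then 1 else 0) - (if k = lf f then 1 else 0)"
proof -
  let ?g = "\<lambda>A. (-1::int)^(card A+1) * (if e \<in> A \<and> Min (lf ` A) = k then 1 else 0)"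
  let ?h = "\<lambda>C. ?g (insert e C) + ?g (insert e (insert f C))"
  have "(\<Sum>A\<in>Pow I. ?g A) = (\<Sum>C\<in>Pow (I - {e,f}). ?h C)"
    by (rule split_sum) (use assms in auto)
  also have "\<dots> = ?h {} + (\<Sum>C\<in>Pow (I - {e,f}) - {{}}. ?h C)"
    by (rule sum.remove) (use fin in auto)
  also have "(\<Sum>C\<in>Pow (I - {e,f}) - {{}}. ?h C) = 0"
  proof (rule sum.neutral, rule ballI)
    fix C assume C: "C \<in> Pow (I - {e,f}) - {{}}"
    hence fC: "finite C" using fin finite_subset by blast
    have ne: "C \<noteq> {}" using C by auto
    have c: "card (insert e C) = card C + 1" "card (insert e (insert f C)) = card C + 2"
      using card_ef[of C I e f] C fin f by auto
    obtain c0 where c0: "c0 \<in> C" using ne by auto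
    have "Min (lf ` insert e C) \<le> lf c0" using fC c0 by simp
    also have "lf c0 \<le> lf f" using lc C c0 by auto
    finally have m1: "Min (lf ` insert e C) \<le> lf f" .
    have im: "lf ` insert e (insert f C) = insert (lf f) (lf ` insert e C)" by auto
    have "Min (lf ` insert e (insert f C)) = min (lf f) (Min (lf ` insert e C))"
      unfolding im by (rule Min_insert) (use fC in auto)
    also have "\<dots> = Min (lf ` insert e C)" using m1 by simp
    finally have m: "Min (lf ` insert e (insert f C)) = Min (lf ` insert e C)" .
    show "?h C = 0"
      using c m by simp
  qed
  also have "?h {} = (if k = lf e then 1 else 0) - (if k = lf f then 1 else 0)"
    using f le by (auto simp: min_def)
  finally show ?thesis by simp
qed

lemma gap_min:
  assumes "0 < i" "finite A" "A \<noteq> {}"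
  shows "int i - 1 - prevA T A i = int (Min ((\<lambda>a. lam T a (i-1)) ` A))"
proof (cases "\<exists>j'<i. T ! j' \<in> A")
  case False
  hence pv: "prevA T A i = -1" unfolding prevA_def by auto
  have "\<And>a. a \<in> A \<Longrightarrow> lam T a (i-1) = i"
  proof -
    fix a assume a: "a \<in> A"
    have "\<not> (\<exists>j\<le>i-1. T ! j = a)" using False a assms(1)
      by (metis Suc_pred' le_imp_less_Suc)
    hence "lam T a (i-1) = i - 1 + 1" unfolding lam_def by (rule if_not_P)
    thus "lam T a (i-1) = i" using assms(1) by simp
  qed
  hence "(\<lambda>a. lam T a (i-1)) ` A = {i}" using assms(3) by auto
  thus ?thesis using pv by simp
next
  case True
  define Q where "Q = {j'. j' < i \<and> T ! j' \<in> A}"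
  have fQ: "finite Q" unfolding Q_def by auto
  have nQ: "Q \<noteq> {}" using True unfolding Q_def by auto
  define p where "p = Max Q"
  have pQ: "p \<in> Q" unfolding p_def using fQ nQ by simp
  have pmax: "\<And>j. j \<in> Q \<Longrightarrow> j \<le> p" unfolding p_def using fQ by simp
  have pv: "prevA T A i = int p" unfolding prevA_def p_def Q_def using True by simp
  have pi: "p < i" using pQ unfolding Q_def by simp
  define a0 where "a0 = T ! p"
  have a0A: "a0 \<in> A" using pQ unfolding Q_def a0_def by simp
  have "Min ((\<lambda>a. lam T a (i-1)) ` A) = i - 1 - p"
  proof (rule Min_eqI)
    show "finite ((\<lambda>a. lam T a (i-1)) ` A)" using assms by simp
  next
    fix y assume "y \<in> (\<lambda>a. lam T a (i-1)) ` A"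
    then obtain a where a: "a \<in> A" and y: "y = lam T a (i-1)" by auto
    show "i - 1 - p \<le> y"
    proof (cases "\<exists>j\<le>i-1. T ! j = a")
      case True
      have "Max {j. j \<le> i-1 \<and> T ! j = a} \<le> p"
      proof (rule Max.boundedI)
        show "finite {j. j \<le> i-1 \<and> T ! j = a}" by auto
        show "{j. j \<le> i-1 \<and> T ! j = a} \<noteq> {}" using True by auto
        fix j assume "j \<in> {j. j \<le> i-1 \<and> T ! j = a}"
        hence "j \<in> Q" unfolding Q_def using a assms(1) by auto
        thus "j \<le> p" by (rule pmax)
      qed
      hence "i - 1 - p \<le> i - 1 - Max {j. j \<le> i-1 \<and> T ! j = a}" by (rule diff_le_mono2)
      moreover have "y = i - 1 - Max {j. j \<le> i-1 \<and> T ! j = a}" unfolding y lam_def by (rule if_P[OF True])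
      ultimately show ?thesis by simp
    next
      case False
      have "y = i - 1 + 1" unfolding y lam_def by (rule if_not_P[OF False])
      thus ?thesis by simp
    qed
  next
    have "Max {j. j \<le> i-1 \<and> T ! j = a0} = p"
    proof (rule Max_eqI)
      show "finite {j. j \<le> i-1 \<and> T ! j = a0}" by auto
      fix j assume "j \<in> {j. j \<le> i-1 \<and> T ! j = a0}"
      hence "j \<in> Q" unfolding Q_def using a0A assms(1) by auto
      thus "j \<le> p" by (rule pmax)
    next
      show "p \<in> {j. j \<le> i-1 \<and> T ! j = a0}" using pi a0_def by auto
    qed
    moreover have "\<exists>j\<le>i-1. T ! j = a0" using pi a0_def by (intro exI[of _ p]) auto
    ultimately have "lam T a0 (i-1) = i - 1 - p" unfolding lam_def by simp
    thus "i - 1 - p \<in> (\<lambda>a. lam T a (i-1)) ` A" using a0A by force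
  qed
  thus ?thesis using pv pi by simp
qed

theorem mainTheorem3:
  fixes T :: "'a list" and I :: "'a set" and i :: nat and r :: "nat \<Rightarrow> 'a"
  assumes "2 \<le> card I"
    and "0 < i" and "i < length T"
    and "bij_betw r {1..card I} I"
    and "\<And>a b. 1 \<le> a \<Longrightarrow> a \<le> b \<Longrightarrow> b \<le> card I \<Longrightarrow>
           lam T (r a) (i - 1) \<le> lam T (r b) (i - 1)"
  shows "(T ! i = r (card I) \<longrightarrow>
            (\<forall>k::nat. gapH T I i k = gapH T I (i - 1) k
               + (if k = lam T (r (card I)) (i - 1) then 1 else 0)
               - (if k = lam T (r (card I - 1)) (i - 1) then 1 else 0)))
       \<and> (T ! i \<noteq> r (card I) \<longrightarrow> (\<forall>k::nat. gapH T I i k = gapH T I (i - 1) k))"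
proof -
  have fin: "finite I" using assms(1) card.infinite by fastforce
  define n where "n = card I"
  define lf where "lf a = lam T a (i-1)" for a
  define D where "D k = (\<Sum>A\<in>{A. A \<subseteq> I \<and> A \<noteq> {}}. (-1::int)^(card A+1) *
      (if T!i \<in> A \<and> int i - 1 - prevA T A i = int k then 1 else 0))" for k
  have cs: "card {j. j \<le> i \<and> P j} = card {j. j \<le> i-1 \<and> P j} + (if P i then 1 else 0)" for P
  proof (cases "P i")
    case True
    have "{j. j \<le> i \<and> P j} = insert i {j. j \<le> i-1 \<and> P j}" using True assms(2) by auto
    moreover have "i \<notin> {j. j \<le> i-1 \<and> P j}" using assms(2) by auto
    ultimately show ?thesis using True by simp
  next
    case False
    have "j \<le> i - 1" if "j \<le> i" "P j" for j
    proof -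
      have "j \<noteq> i" using False that by auto
      thus ?thesis using that by simp
    qed
    hence "{j. j \<le> i \<and> P j} = {j. j \<le> i-1 \<and> P j}" using assms(2) by auto
    thus ?thesis using False by simp
  qed
  have step: "gapH T I i k = gapH T I (i-1) k + D k" for k
  proof -
    have "gapH T I i k = (\<Sum>A\<in>{A. A \<subseteq> I \<and> A \<noteq> {}}. (-1) ^ (card A + 1) *
      int (card {j. j \<le> i-1 \<and> T ! j \<in> A \<and> int j - 1 - prevA T A j = int k}) +
      (-1::int)^(card A+1) * (if T!i \<in> A \<and> int i - 1 - prevA T A i = int k then 1 else 0))"
      unfolding gapH_def
    proof (rule sum.cong)
      fix A
      have "card {j. j \<le> i \<and> T ! j \<in> A \<and> int j - 1 - prevA T A j = int k}
        = card {j. j \<le> i-1 \<and> T ! j \<in> A \<and> int j - 1 - prevA T A j = int k}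
          + (if T!i \<in> A \<and> int i - 1 - prevA T A i = int k then 1 else 0)"
        using cs[of "\<lambda>j. T ! j \<in> A \<and> int j - 1 - prevA T A j = int k"] by simp
      thus "(-1) ^ (card A + 1) * int (card {j. j \<le> i \<and> T ! j \<in> A \<and> int j - 1 - prevA T A j = int k})
        = (-1) ^ (card A + 1) *
      int (card {j. j \<le> i-1 \<and> T ! j \<in> A \<and> int j - 1 - prevA T A j = int k}) +
      (-1::int)^(card A+1) * (if T!i \<in> A \<and> int i - 1 - prevA T A i = int k then 1 else 0)"
        by (simp add: distrib_left)
    qed simp
    thus ?thesis unfolding gapH_def D_def by (simp only: sum.distrib)
  qed
  have Dz: "T!i \<notin> I \<Longrightarrow> D k = 0" for k
    unfolding D_def by (rule sum.neutral) auto
  have DP: "D k = (\<Sum>A\<in>Pow I. (-1::int)^(card A+1) * (if T!i \<in> A \<and> Min (lf ` A) = k then 1 else 0))" for k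
  proof -
    let ?g = "\<lambda>A. (-1::int)^(card A+1) * (if T!i \<in> A \<and> Min (lf ` A) = k then 1 else 0)"
    have "D k = (\<Sum>A\<in>{A. A \<subseteq> I \<and> A \<noteq> {}}. ?g A)" unfolding D_def
    proof (rule sum.cong)
      fix A assume "A \<in> {A. A \<subseteq> I \<and> A \<noteq> {}}"
      hence "finite A" "A \<noteq> {}" using fin finite_subset by auto
      from gap_min[OF assms(2) this, of T]
      have "(int i - 1 - prevA T A i = int k) = (Min (lf ` A) = k)" unfolding lf_def by simp
      thus "(-1::int)^(card A+1) * (if T!i \<in> A \<and> int i - 1 - prevA T A i = int k then 1 else 0) = ?g A"
        by simp
    qed simp
    also have "\<dots> = sum ?g (insert {} {A. A \<subseteq> I \<and> A \<noteq> {}})"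
      by (subst sum.insert) (use fin in auto)
    also have "insert {} {A. A \<subseteq> I \<and> A \<noteq> {}} = Pow I" by auto
    finally show ?thesis .
  qed
  have n2: "2 \<le> n" using assms(1) n_def by simp
  have rI: "\<And>j. 1 \<le> j \<Longrightarrow> j \<le> n \<Longrightarrow> r j \<in> I" using assms(4) n_def by (auto simp: bij_betw_def)
  have rinj: "\<And>a b. a \<in> {1..n} \<Longrightarrow> b \<in> {1..n} \<Longrightarrow> r a = r b \<Longrightarrow> a = b"
    using assms(4) unfolding n_def bij_betw_def inj_on_def by blast
  have rsurj: "\<exists>j. 1 \<le> j \<and> j \<le> n \<and> c = r j" if c: "c \<in> I" for c
  proof -
    have "c \<in> r ` {1..n}" using assms(4) c unfolding n_def bij_betw_def by simp
    thus ?thesis by auto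
  qed
  have lfle: "\<And>a b. 1 \<le> a \<Longrightarrow> a \<le> b \<Longrightarrow> b \<le> n \<Longrightarrow> lf (r a) \<le> lf (r b)"
    using assms(5) n_def lf_def by simp
  have fne: "r (n-1) \<noteq> r n"
  proof
    assume "r (n-1) = r n"
    hence "n - 1 = n" using rinj[of "n-1" n] n2 by simp
    thus False using n2 by simp
  qed
  show ?thesis
  proof (intro conjI impI allI)
    fix k assume e: "T ! i = r (card I)"
    have "D k = (if k = lf (r n) then 1 else 0) - (if k = lf (r (n-1)) then 1 else 0)"
      unfolding DP e n_def[symmetric]
    proof (rule comb_b[OF fin])
      show "r n \<in> I" "r (n-1) \<in> I" using rI n2 by auto
      show "r (n-1) \<noteq> r n" by (rule fne)
      show "lf (r (n-1)) \<le> lf (r n)" using lfle n2 by auto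
      fix c assume c: "c \<in> I - {r n}"
      then obtain j where j: "1 \<le> j" "j \<le> n" "c = r j" using rsurj by blast
      have "j \<noteq> n" using c j by auto
      thus "lf c \<le> lf (r (n-1))" using lfle j by auto
    qed
    thus "gapH T I i k = gapH T I (i - 1) k
               + (if k = lam T (r (card I)) (i - 1) then 1 else 0)
               - (if k = lam T (r (card I - 1)) (i - 1) then 1 else 0)"
      using step[of k] unfolding lf_def n_def by simp
  next
    fix k assume e: "T ! i \<noteq> r (card I)"
    have "D k = 0"
    proof (cases "T ! i \<in> I")
      case False thus ?thesis by (rule Dz)
    next
      case True
      then obtain j where j: "1 \<le> j" "j \<le> n" "T ! i = r j" using rsurj by blast
      show ?thesis unfolding DP
      proof (rule comb_a[OF fin True])
        show "r n \<in> I" using rI n2 by auto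
        show "r n \<noteq> T ! i" using e n_def by simp
        show "lf (T ! i) \<le> lf (r n)" using lfle j by auto
      qed
    qed
    thus "gapH T I i k = gapH T I (i - 1) k" using step[of k] by simp
  qed
qed

end
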